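(* Let $X=\sum_{i=1}^n i\cdot X_i$, where $X_1,\dots,X_n$ are unknown independent Bernoulli random variables (the $i$-th weight is $i$). Let $L$ be any learning algorithm which, given $n$ and access to independent draws from $X$, outputs a hypothesis distribution $\hat{X}$ such that $d_{\mathrm{TV}}(\hat{X},X)\le 1/25$ with probability at least $e^{-o(n)}$ (for every such target $X$). Then $L$ must use $\Omega(n)$ samples.
   Context: For distributions $X,Y$ on a finite set $D$, $d_{\mathrm{TV}}(X,Y)=\frac12\sum_{\alpha\in D}|X(\alpha)-Y(\alpha)|$. *)

theory Defs
  imports "HOL-Probability.Probability" "HOL-Library.Landau_Symbols"
begin

definition dTV :: "nat pmf \<Rightarrow> nat pmf \<Rightarrow> real" where
  "dTV P Q = (1/2) * infsum (\<lambda>a. \<bar>pmf P a - pmf Q a\<bar>) UNIV"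

definition wsum_bern :: "nat \<Rightarrow> (nat \<Rightarrow> real) \<Rightarrow> nat pmf" where
  "wsum_bern n p = map_pmf (\<lambda>b. \<Sum>i\<in>{1..n}. if b i then i else 0)
      (Pi_pmf {1..n} False (\<lambda>i. bernoulli_pmf (p i)))"

definition samples :: "nat \<Rightarrow> nat pmf \<Rightarrow> (nat \<Rightarrow> nat) pmf" where
  "samples m X = Pi_pmf {..<m} 0 (\<lambda>_. X)"

definition success_prob ::
  "nat \<Rightarrow> ((nat \<Rightarrow> nat) \<Rightarrow> nat pmf pmf) \<Rightarrow> nat pmf \<Rightarrow> real \<Rightarrow> real" where
  "success_prob m A X eps =
     measure_pmf.prob (bind_pmf (samples m X) A) {H. dTV H X \<le> eps}"

end

theory Submission
  imports Defs
begin


lemma pmf_summ: "(\<lambda>a. pmf P a) summable_on A"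
proof -
  have "Infinite_Sum.abs_summable_on (pmf P) A"
    using abs_summable_equivalent pmf_abs_summable by blast
  then show ?thesis by (simp add: abs_summable_summable)
qed

lemma absdiff_summ: "(\<lambda>a. \<bar>pmf P a - pmf Q a\<bar>) summable_on A"
proof (rule summable_on_comparison_test[of "\<lambda>a. pmf P a + pmf Q a"])
  show "(\<lambda>a. pmf P a + pmf Q a) summable_on A"
    by (intro summable_on_add pmf_summ)
qed (auto simp: pmf_nonneg abs_le_iff)

lemma dTV_sym: "dTV P Q = dTV Q P"
  unfolding dTV_def by (simp add: abs_minus_commute)

lemma dTV_tri: "dTV X Y \<le> dTV X H + dTV H Y"
proof -
  have "infsum (\<lambda>a. \<bar>pmf X a - pmf Y a\<bar>) UNIV \<le>
        infsum (\<lambda>a. \<bar>pmf X a - pmf H a\<bar> + \<bar>pmf H a - pmf Y a\<bar>) UNIV"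
    by (intro infsum_mono absdiff_summ summable_on_add) auto
  also have "\<dots> = infsum (\<lambda>a. \<bar>pmf X a - pmf H a\<bar>) UNIV + infsum (\<lambda>a. \<bar>pmf H a - pmf Y a\<bar>) UNIV"
    by (intro infsum_add absdiff_summ)
  finally show ?thesis unfolding dTV_def by simp
qed

lemma dTV_ge: assumes "finite F"
  shows "(1/2) * (\<Sum>a\<in>F. \<bar>pmf P a - pmf Q a\<bar>) \<le> dTV P Q"
proof -
  have "(\<Sum>a\<in>F. \<bar>pmf P a - pmf Q a\<bar>) = infsum (\<lambda>a. \<bar>pmf P a - pmf Q a\<bar>) F"
    using assms by simp
  also have "\<dots> \<le> infsum (\<lambda>a. \<bar>pmf P a - pmf Q a\<bar>) UNIV"
    by (intro infsum_mono_neutral absdiff_summ) auto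
  finally show ?thesis unfolding dTV_def by simp
qed

lemma dom_nn:
  assumes "\<And>x. pmf M x \<le> C * pmf M' x" "C \<ge> 0"
  shows "(\<integral>\<^sup>+x. f x \<partial>M) \<le> ennreal C * (\<integral>\<^sup>+x. f x \<partial>M')"
proof -
  have "(\<integral>\<^sup>+x. f x \<partial>M) = \<integral>\<^sup>+ x. ennreal (pmf M x) * f x \<partial>count_space UNIV"
    by (rule nn_integral_measure_pmf)
  also have "\<dots> \<le> \<integral>\<^sup>+ x. ennreal C * (ennreal (pmf M' x) * f x) \<partial>count_space UNIV"
    apply (intro nn_integral_mono)
    apply (subst mult.assoc[symmetric])
    apply (intro mult_right_mono)
    using assms by (auto simp: ennreal_mult[symmetric] pmf_nonneg)
  also have "\<dots> = ennreal C * \<integral>\<^sup>+ x. ennreal (pmf M' x) * f x \<partial>count_space UNIV"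
    by (rule nn_integral_cmult) simp
  also have "\<dots> = ennreal C * (\<integral>\<^sup>+x. f x \<partial>M')"
    by (simp add: nn_integral_measure_pmf)
  finally show ?thesis .
qed

lemma dom_map:
  assumes "\<And>x. pmf M x \<le> C * pmf M' x" "C \<ge> 0"
  shows "pmf (map_pmf g M) y \<le> C * pmf (map_pmf g M') y"
proof -
  have "ennreal (pmf (map_pmf g M) y) = (\<integral>\<^sup>+x. indicator (g -` {y}) x \<partial>M)"
    by (simp add: pmf_map measure_pmf.emeasure_eq_measure[symmetric])
  also have "\<dots> \<le> ennreal C * (\<integral>\<^sup>+x. indicator (g -` {y}) x \<partial>M')"
    by (rule dom_nn[OF assms])
  also have "\<dots> = ennreal (C * pmf (map_pmf g M') y)"
    using assms(2) by (simp add: pmf_map measure_pmf.emeasure_eq_measure ennreal_mult)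
  finally show ?thesis using assms(2) by (simp add: pmf_nonneg)
qed

lemma dom_Pi:
  assumes "finite A" "\<And>i x. i \<in> A \<Longrightarrow> pmf (p i) x \<le> c i * pmf (p' i) x" "\<And>i. i \<in> A \<Longrightarrow> c i \<ge> 0"
  shows "pmf (Pi_pmf A d p) f \<le> (\<Prod>i\<in>A. c i) * pmf (Pi_pmf A d p') f"
proof (cases "\<forall>x. x \<notin> A \<longrightarrow> f x = d")
  case True
  have "(\<Prod>i\<in>A. pmf (p i) (f i)) \<le> (\<Prod>i\<in>A. c i * pmf (p' i) (f i))"
    by (intro prod_mono) (use assms in \<open>auto simp: pmf_nonneg\<close>)
  then show ?thesis using True assms(1) by (simp add: pmf_Pi prod.distrib)
next
  case False
  then show ?thesis using assms(1) by (auto simp: pmf_Pi)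
qed



definition pT :: "nat \<Rightarrow> nat set \<Rightarrow> nat \<Rightarrow> real" where
  "pT N T i = (if i \<in> T then 1 / real N else 0)"

definition Hs :: "nat \<Rightarrow> nat set" where "Hs n = {n - n div 2 + 1..n}"

lemma Hs_sub: "Hs n \<subseteq> {1..n}" unfolding Hs_def by auto
lemma card_Hs: "card (Hs n) = n div 2" unfolding Hs_def by simp
lemma Hs_big: "a \<in> Hs n \<Longrightarrow> n < 2 * a" unfolding Hs_def by auto

lemma pT_range: "1 \<le> N \<Longrightarrow> 0 \<le> pT N T i \<and> pT N T i \<le> 1"
  unfolding pT_def by auto

lemma domination:
  assumes N: "N = n div 2" "1 \<le> N" and T: "T \<subseteq> Hs n"
  shows "pmf (wsum_bern n (pT N T)) v \<le> (1 + 1/N)^N * pmf (wsum_bern n (\<lambda>i. if i \<in> Hs n then 1/(real N+1) else 0)) v"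
proof -
  define c where "c i = (if i \<in> Hs n then 1 + 1/real N else 1)" for i
  have prodc: "(\<Prod>i\<in>{1..n}. c i) = (1 + 1/N)^N"
  proof -
    have "(\<Prod>i\<in>{1..n}. c i) = (\<Prod>i\<in>Hs n. 1 + 1/real N)"
      unfolding c_def using Hs_sub[of n]
      by (intro prod.mono_neutral_cong_right) auto
    also have "\<dots> = (1 + 1/N)^N" using card_Hs N by simp
    finally show ?thesis .
  qed
  have fac: "pmf (bernoulli_pmf (pT N T i)) x \<le> c i * pmf (bernoulli_pmf (if i \<in> Hs n then 1/(real N+1) else 0)) x" for i x
  proof -
    have N0: "real N > 0" using N by simp
    have pos: "real N * real N > 0" using N0 by simp
    have e1: "(1 + 1/real N) * (1 / (real N + 1)) = 1/ real N" using N0 pos by (simp add: field_simps; linarith)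
    have e2: "(1 + 1/real N) * (1 - 1 / (real N + 1)) = 1" using N0 pos by (simp add: field_simps; linarith)
    show ?thesis
      using T N e1 e2 unfolding c_def pT_def
      by (cases x) (auto)
  qed
  have "pmf (Pi_pmf {1..n} False (\<lambda>i. bernoulli_pmf (pT N T i))) b \<le>
     (\<Prod>i\<in>{1..n}. c i) * pmf (Pi_pmf {1..n} False (\<lambda>i. bernoulli_pmf (if i \<in> Hs n then 1/(real N+1) else 0))) b" for b
    by (rule dom_Pi) (use fac in \<open>auto simp: c_def\<close>)
  then show ?thesis unfolding wsum_bern_def prodc
    by (intro dom_map) auto
qed

lemma zero_outside:
  assumes N: "N = n div 2" "1 \<le> N" and T: "T \<subseteq> Hs n" and v: "v \<in> Hs n" "v \<notin> T"
  shows "pmf (wsum_bern n (pT N T)) v = 0"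
proof -
  let ?M = "Pi_pmf {1..n} False (\<lambda>i. bernoulli_pmf (pT N T i))"
  have "(\<Sum>i\<in>{1..n}. if b i then i else 0) \<noteq> v" if b: "b \<in> set_pmf ?M" for b
  proof -
    have "pmf ?M b \<noteq> 0" using b by (simp add: set_pmf_iff)
    then have out: "\<forall>x. x \<notin> {1..n} \<longrightarrow> b x = False" and
      pr: "(\<Prod>i\<in>{1..n}. pmf (bernoulli_pmf (pT N T i)) (b i)) \<noteq> 0"
      by (auto simp: pmf_Pi split: if_splits)
    have bT: "i \<in> T" if "b i" for i
    proof (rule ccontr)
      assume "i \<notin> T"
      have "i \<in> {1..n}" using out that by blast
      moreover have "pmf (bernoulli_pmf (pT N T i)) (b i) = 0"
        using \<open>i \<notin> T\<close> that by (simp add: pT_def)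
      ultimately show False using pr by (simp add: prod_zero_iff)
    qed
    define A where "A = {i\<in>{1..n}. b i}"
    have sumA: "(\<Sum>i\<in>{1..n}. if b i then i else 0) = \<Sum>A"
      unfolding A_def by (rule sum.inter_filter[symmetric]) simp
    have AT: "A \<subseteq> T" using bT A_def by auto
    have finA: "finite A" unfolding A_def by simp
    have v1: "1 \<le> v" "v \<le> n" using v Hs_sub[of n] by auto
    show ?thesis
    proof (cases "A = {}")
      case True then show ?thesis using sumA v1 by simp
    next
      case False
      then obtain a where a: "a \<in> A" by blast
      show ?thesis
      proof (cases "A = {a}")
        case True then show ?thesis using sumA a AT v by auto
      next
        case False
        then obtain c where c: "c \<in> A" "c \<noteq> a" using a by blast
        have "\<Sum>{a, c} \<le> \<Sum>A" using a c finA by (intro sum_mono2) auto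
        moreover have "n < 2 * a" "n < 2 * c" using a c AT T Hs_big by blast+
        ultimately show ?thesis using sumA c v1 by auto
      qed
    qed
  qed
  then show ?thesis unfolding wsum_bern_def pmf_map measure_pmf_zero_iff by auto
qed

lemma lower_inside:
  assumes N: "N = n div 2" "1 \<le> N" and S: "S \<subseteq> Hs n" and v: "v \<in> S"
  shows "(1 / real N) * (1 - 1/real N)^(N-1) \<le> pmf (wsum_bern n (pT N S)) v"
proof -
  let ?M = "Pi_pmf {1..n} False (\<lambda>i. bernoulli_pmf (pT N S i))"
  let ?g = "\<lambda>b. (\<Sum>i\<in>{1..n}. if b i then i else (0::nat))"
  define bv where "bv = (\<lambda>i. i = v)"
  have vn: "v \<in> {1..n}" using v S Hs_sub by blast
  have gbv: "?g bv = v" unfolding bv_def using vn by (simp add: sum.delta')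
  have "pmf ?M bv = (\<Prod>i\<in>{1..n}. pmf (bernoulli_pmf (pT N S i)) (bv i))"
    using vn by (auto simp: pmf_Pi bv_def)
  also have "\<dots> = (\<Prod>i\<in>{1..n}. if i = v then 1/real N else (if i \<in> S then 1 - 1/real N else 1))"
    using N v by (intro prod.cong) (auto simp: bv_def pT_def)
  also have "\<dots> = (1/real N) * (\<Prod>i\<in>{1..n}-{v}. if i = v then 1/real N else (if i \<in> S then 1 - 1/real N else 1))"
    using vn by (subst prod.remove[of _ v]) auto
  also have "(\<Prod>i\<in>{1..n}-{v}. if i = v then 1/real N else (if i \<in> S then 1 - 1/real N else 1))
      = (\<Prod>i\<in>{1..n}-{v}. (if i \<in> S then 1 - 1/real N else 1))"
    by (intro prod.cong) auto
  also have "\<dots> = (1 - 1/real N) ^ card (({1..n}-{v}) \<inter> S)"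
    by (simp add: prod.If_cases)
  finally have pbv: "pmf ?M bv = (1/real N) * (1 - 1/real N) ^ card (({1..n}-{v}) \<inter> S)" .
  have "card (({1..n}-{v}) \<inter> S) \<le> N - 1"
  proof -
    have "({1..n}-{v}) \<inter> S = S - {v}" using S Hs_sub by auto
    moreover have "card S \<le> N" using card_mono[OF _ S] card_Hs N by (metis finite_atLeastAtMost Hs_def)
    moreover have "finite S" using S by (metis finite_subset finite_atLeastAtMost Hs_def)
    ultimately show ?thesis using v by (simp add: card_Diff_singleton)
  qed
  then have "(1 - 1/real N)^(N-1) \<le> (1 - 1/real N) ^ card (({1..n}-{v}) \<inter> S)"
    using N by (intro power_decreasing) auto
  then have "(1 / real N) * (1 - 1/real N)^(N-1) \<le> pmf ?M bv"
    unfolding pbv by (intro mult_left_mono) auto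
  also have "pmf ?M bv = measure ?M {bv}" by (simp add: measure_pmf_single)
  also have "\<dots> \<le> measure ?M (?g -` {v})"
    using gbv by (intro measure_pmf.finite_measure_mono) auto
  also have "\<dots> = pmf (wsum_bern n (pT N S)) v" unfolding wsum_bern_def pmf_map ..
  finally show ?thesis .
qed



lemma packing:
  fixes P :: "'t set" and Q :: "'t \<Rightarrow> 's pmf" and B :: "'t \<Rightarrow> 'h set" and Lr :: "'s \<Rightarrow> 'h pmf"
  assumes finP: "finite P"
    and dom: "\<And>T s. T \<in> P \<Longrightarrow> pmf (Q T) s \<le> C * pmf Q0 s" and C0: "C \<ge> 0"
    and cnt: "\<And>H. real (card {T\<in>P. H \<in> B T}) \<le> K"
  shows "(\<Sum>T\<in>P. measure (bind_pmf (Q T) Lr) (B T)) \<le> C * K"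
proof -
  have K0: "K \<ge> 0" using cnt[of undefined] by (meson of_nat_0_le_iff order_trans)
  have ind: "(\<Sum>T\<in>P. indicator (B T) H :: ennreal) \<le> ennreal K" for H
  proof -
    have "(\<Sum>T\<in>P. indicator (B T) H :: ennreal) = of_nat (card {T\<in>P. H \<in> B T})"
      using finP by (simp add: indicator_def sum.If_cases Int_def conj_commute)
    also have "\<dots> = ennreal (real (card {T\<in>P. H \<in> B T}))" by (rule ennreal_of_nat_eq_real_of_nat)
    also have "\<dots> \<le> ennreal K" using cnt by (intro ennreal_leI) 
    finally show ?thesis .
  qed
  have inner: "(\<Sum>T\<in>P. emeasure (Lr s) (B T)) \<le> ennreal K" for s
  proof -
    have "(\<Sum>T\<in>P. emeasure (Lr s) (B T)) = (\<Sum>T\<in>P. \<integral>\<^sup>+H. indicator (B T) H \<partial>Lr s)"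
      by simp
    also have "\<dots> = \<integral>\<^sup>+H. (\<Sum>T\<in>P. indicator (B T) H) \<partial>Lr s"
      by (rule nn_integral_sum[symmetric]) simp
    also have "\<dots> \<le> \<integral>\<^sup>+H. ennreal K \<partial>Lr s"
      by (intro nn_integral_mono ind)
    also have "\<dots> = ennreal K" by simp
    finally show ?thesis .
  qed
  have I: "(\<Sum>T\<in>P. \<integral>\<^sup>+s. emeasure (Lr s) (B T) \<partial>Q0) \<le> ennreal K"
  proof -
    have "(\<Sum>T\<in>P. \<integral>\<^sup>+s. emeasure (Lr s) (B T) \<partial>Q0) = \<integral>\<^sup>+s. (\<Sum>T\<in>P. emeasure (Lr s) (B T)) \<partial>Q0"
      by (rule nn_integral_sum[symmetric]) simp
    also have "\<dots> \<le> \<integral>\<^sup>+s. ennreal K \<partial>Q0"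
      by (intro nn_integral_mono inner)
    also have "\<dots> = ennreal K" by simp
    finally show ?thesis .
  qed
  have "ennreal (\<Sum>T\<in>P. measure (bind_pmf (Q T) Lr) (B T)) = (\<Sum>T\<in>P. emeasure (bind_pmf (Q T) Lr) (B T))"
    by (simp add: measure_pmf.emeasure_eq_measure sum_ennreal)
  also have "\<dots> = (\<Sum>T\<in>P. \<integral>\<^sup>+s. emeasure (Lr s) (B T) \<partial>Q T)" by simp
  also have "\<dots> \<le> (\<Sum>T\<in>P. ennreal C * \<integral>\<^sup>+s. emeasure (Lr s) (B T) \<partial>Q0)"
    by (intro sum_mono dom_nn dom C0)
  also have "\<dots> = ennreal C * (\<Sum>T\<in>P. \<integral>\<^sup>+s. emeasure (Lr s) (B T) \<partial>Q0)"
    by (simp add: sum_distrib_left)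
  also have "\<dots> \<le> ennreal C * ennreal K"
    using I by (intro mult_left_mono) auto
  finally have "ennreal (\<Sum>T\<in>P. measure (bind_pmf (Q T) Lr) (B T)) \<le> ennreal (C * K)"
    using C0 K0 by (simp add: ennreal_mult)
  then show ?thesis using C0 K0 by (simp add: ennreal_le_iff)
qed

lemma sum_Pow_pow:
  fixes x :: real
  assumes "finite A"
  shows "(\<Sum>D\<in>Pow A. x ^ card D) = (1 + x) ^ card A"
  using assms
proof (induction A rule: finite_induct)
  case empty then show ?case by simp
next
  case (insert a A)
  have disj: "Pow A \<inter> insert a ` Pow A = {}" using insert by auto
  have inj: "inj_on (insert a) (Pow A)" using insert unfolding inj_on_def by (metis PowD insert_ident subset_iff)
  have "(\<Sum>D\<in>Pow (insert a A). x ^ card D) = (\<Sum>D\<in>Pow A. x ^ card D) + (\<Sum>D\<in>insert a ` Pow A. x ^ card D)"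
    unfolding Pow_insert using insert disj by (intro sum.union_disjoint) auto
  also have "(\<Sum>D\<in>insert a ` Pow A. x ^ card D) = (\<Sum>D\<in>Pow A. x ^ card (insert a D))"
    using inj by (simp add: sum.reindex)
  also have "\<dots> = (\<Sum>D\<in>Pow A. x * x ^ card D)"
  proof (intro sum.cong refl)
    fix D assume "D \<in> Pow A"
    then have "finite D" "a \<notin> D" using insert finite_subset by auto
    then show "x ^ card (insert a D) = x * x ^ card D" by simp
  qed
  finally show ?case using insert by (simp add: sum_distrib_left[symmetric] algebra_simps)
qed

lemma gamma_pos: "ln (9/5) + (4/9) * ln (5/4) < ln (2::real)"
proof -
  have "(9/5::real)^9 * (5/4)^4 < 2^9" unfolding power_divide by simp
  then have "ln ((9/5::real)^9 * (5/4)^4) < ln (2^9)"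
    by (intro ln_less_cancel_iff[THEN iffD2]) auto
  moreover have "ln ((9/5::real)^9 * (5/4)^4) = ln ((9/5::real)^9) + ln ((5/4::real)^4)"
    by (rule ln_mult_pos) auto
  ultimately have "9 * ln (9/5::real) + 4 * ln (5/4) < 9 * ln 2"
    by (simp only: ln_realpow)
  then show ?thesis by simp
qed

lemma exp_pow_le: "1 \<le> N \<Longrightarrow> (1 + 1 / real N) ^ N \<le> exp 1"
proof -
  assume N: "1 \<le> N"
  have "(1 + 1 / real N) ^ N \<le> exp (1 / real N) ^ N"
    by (intro power_mono) (auto simp: exp_ge_add_one_self add.commute)
  also have "\<dots> = exp (real N * (1 / real N))" by (rule exp_of_nat_mult[symmetric])
  also have "\<dots> = exp 1" using N by simp
  finally show ?thesis .
qed

lemma exp_low: "1 \<le> N \<Longrightarrow> exp (-1) \<le> (1 - 1 / real N) ^ (N - 1)"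
proof -
  assume N: "1 \<le> N"
  show ?thesis
  proof (cases "N = 1")
    case True then show ?thesis by simp
  next
    case False
    then obtain k where k: "N = Suc k" "1 \<le> k" using N by (metis Suc_le_D not_less_eq_eq One_nat_def Suc_le_eq le_neq_implies_less less_1_mult)
    have "(1 + 1 / real k) ^ k \<le> exp 1" using exp_pow_le k by simp
    moreover have "1 - 1 / real N = 1 / (1 + 1 / real k)" using k by (simp add: field_simps)
    ultimately have "exp (-1) \<le> (1 - 1/real N)^k"
    proof -
      assume a1: "(1 + 1 / real k) ^ k \<le> exp 1" and a2: "1 - 1 / real N = 1 / (1 + 1 / real k)"
      have "(1 - 1/real N)^k = 1 / (1 + 1 / real k) ^ k" using a2 by (simp add: power_one_over)
      moreover have "1 / exp 1 \<le> 1 / (1 + 1 / real k) ^ k"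
        by (rule divide_left_mono) (use a1 in \<open>auto intro!: mult_pos_pos zero_less_power add_pos_nonneg\<close>)
      ultimately show ?thesis by (simp add: exp_minus inverse_eq_divide)
    qed
    then show ?thesis using k by simp
  qed
qed



lemma sep:
  assumes N: "N = n div 2" "1 \<le> N" and S: "S \<subseteq> Hs n" and T: "T \<subseteq> Hs n"
  shows "real (card ((S - T) \<union> (T - S))) * (exp (-1) / real N) / 2 \<le> dTV (wsum_bern n (pT N S)) (wsum_bern n (pT N T))"
proof -
  have finH: "finite (Hs n)" unfolding Hs_def by simp
  have fin: "finite ((S - T) \<union> (T - S))" using S T finH finite_subset by blast
  have low: "exp (-1) / real N \<le> (1 / real N) * (1 - 1/real N)^(N-1)"
    using exp_low[OF N(2)] N by (simp add: divide_right_mono)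
  have trm: "exp (-1) / real N \<le> \<bar>pmf (wsum_bern n (pT N S)) v - pmf (wsum_bern n (pT N T)) v\<bar>"
    if v: "v \<in> (S - T) \<union> (T - S)" for v
  proof (cases "v \<in> S")
    case True
    then have "v \<notin> T" using v by auto
    then have "pmf (wsum_bern n (pT N T)) v = 0" using zero_outside[OF N T] True S by auto
    moreover have "(1 / real N) * (1 - 1/real N)^(N-1) \<le> pmf (wsum_bern n (pT N S)) v"
      using lower_inside[OF N S True] .
    ultimately show ?thesis using low by simp
  next
    case False
    then have "v \<in> T" using v by auto
    then have "pmf (wsum_bern n (pT N S)) v = 0" using zero_outside[OF N S] False T by auto
    moreover have "(1 / real N) * (1 - 1/real N)^(N-1) \<le> pmf (wsum_bern n (pT N T)) v"
      using lower_inside[OF N T \<open>v \<in> T\<close>] .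
    ultimately show ?thesis using low by simp
  qed
  have "real (card ((S - T) \<union> (T - S))) * (exp (-1) / real N) \<le>
        (\<Sum>v\<in>(S - T) \<union> (T - S). \<bar>pmf (wsum_bern n (pT N S)) v - pmf (wsum_bern n (pT N T)) v\<bar>)"
    by (rule sum_bounded_below) (rule trm)
  then have "real (card ((S - T) \<union> (T - S))) * (exp (-1) / real N) / 2 \<le>
        (1/2) * (\<Sum>v\<in>(S - T) \<union> (T - S). \<bar>pmf (wsum_bern n (pT N S)) v - pmf (wsum_bern n (pT N T)) v\<bar>)"
    by simp
  also have "\<dots> \<le> dTV (wsum_bern n (pT N S)) (wsum_bern n (pT N T))"
    by (rule dTV_ge[OF fin])
  finally show ?thesis .
qed

lemma ball:
  assumes N: "N = n div 2" "1 \<le> N"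
  shows "real (card {T \<in> Pow (Hs n). H \<in> {G. dTV G (wsum_bern n (pT N T)) \<le> 1/25}})
     \<le> (9/5)^N * exp (4 * real N / 9 * ln (5/4))"
proof -
  define Z where "Z = {T \<in> Pow (Hs n). H \<in> {G. dTV G (wsum_bern n (pT N T)) \<le> 1/25}}"
  define W where "W = {D \<in> Pow (Hs n). 9 * card D \<le> 4 * N}"
  define E where "E = exp (4 * real N / 9 * ln (5/4))"
  have finH: "finite (Hs n)" unfolding Hs_def by simp
  have E0: "E \<ge> 0" unfolding E_def by simp
  have cardW: "real (card W) \<le> (9/5)^N * E"
  proof -
    have one: "1 \<le> (4/5) ^ card D * E" if "D \<in> W" for D
    proof -
      have k: "9 * real (card D) \<le> 4 * real N" using that unfolding W_def
        by (metis (mono_tags, lifting) mem_Collect_eq of_nat_le_iff of_nat_mult of_nat_numeral)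
      have l: "ln (4/5::real) = - ln (5/4)"
        by (metis inverse_divide ln_inverse zero_less_divide_iff zero_less_numeral)
      have "(4/5::real) ^ card D = exp (real (card D) * ln (4/5))"
        by (simp add: exp_of_nat_mult)
      then have "(4/5) ^ card D * E = exp ((4 * real N / 9 - real (card D)) * ln (5/4))"
        unfolding E_def l by (simp add: exp_add[symmetric] algebra_simps)
      moreover have "0 \<le> (4 * real N / 9 - real (card D)) * ln (5/4)"
        using k by (intro mult_nonneg_nonneg) auto
      ultimately show ?thesis by simp
    qed
    have "real (card W) = (\<Sum>D\<in>W. 1)" by simp
    also have "\<dots> \<le> (\<Sum>D\<in>W. (4/5) ^ card D * E)" by (intro sum_mono one)
    also have "\<dots> \<le> (\<Sum>D\<in>Pow (Hs n). (4/5) ^ card D * E)"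
      using finH E0 by (intro sum_mono2) (auto simp: W_def)
    also have "\<dots> = (9/5)^N * E"
      using sum_Pow_pow[OF finH, of "4/5"] card_Hs N by (simp add: sum_distrib_right[symmetric])
    finally show ?thesis .
  qed
  have "card Z \<le> card W"
  proof (cases "Z = {}")
    case True then show ?thesis by simp
  next
    case False
    then obtain S0 where S0: "S0 \<in> Z" by blast
    have S0H: "S0 \<subseteq> Hs n" using S0 unfolding Z_def by auto
    have "Z \<subseteq> (\<lambda>D. (S0 - D) \<union> (D - S0)) ` W"
    proof
      fix T assume TZ: "T \<in> Z"
      have TH: "T \<subseteq> Hs n" using TZ unfolding Z_def by auto
      have d: "dTV (wsum_bern n (pT N S0)) (wsum_bern n (pT N T)) \<le> 2/25"
        using dTV_tri[of "wsum_bern n (pT N S0)" "wsum_bern n (pT N T)" H] dTV_sym[of H "wsum_bern n (pT N S0)"]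
          S0 TZ unfolding Z_def by auto
      define c where "c = card ((S0 - T) \<union> (T - S0))"
      have "real c * (exp (-1) / real N) / 2 \<le> 2/25"
        using sep[OF N S0H TH] d unfolding c_def by linarith
      then have "real c * exp (-1) \<le> 4/25 * real N" using N by (simp add: field_simps)
      then have "real c * exp (-1) * exp 1 \<le> 4/25 * real N * exp 1"
        by (intro mult_right_mono) auto
      then have "real c \<le> 4/25 * real N * exp 1" by (simp add: exp_minus field_simps)
      also have "\<dots> \<le> 4/25 * real N * (272/100)"
        using e_less_272 by (intro mult_left_mono) auto
      finally have "9 * real c \<le> 4 * real N" by simp
      then have "9 * c \<le> 4 * N" by linarith
      then have "(S0 - T) \<union> (T - S0) \<in> W" unfolding W_def c_def using S0H TH by auto
      moreover have "T = (S0 - ((S0 - T) \<union> (T - S0))) \<union> (((S0 - T) \<union> (T - S0)) - S0)" by blast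
      ultimately show "T \<in> (\<lambda>D. (S0 - D) \<union> (D - S0)) ` W" by blast
    qed
    then have "card Z \<le> card ((\<lambda>D. (S0 - D) \<union> (D - S0)) ` W)"
      using finH by (intro card_mono) (auto simp: W_def)
    also have "\<dots> \<le> card W" by (rule card_image_le) (use finH in \<open>auto simp: W_def\<close>)
    finally show ?thesis .
  qed
  then have "real (card Z) \<le> real (card W)" by simp
  then show ?thesis using cardW unfolding Z_def E_def by linarith
qed



lemma key:
  assumes N: "N = n div 2" "1 \<le> N"
    and learn: "\<And>T. T \<subseteq> Hs n \<Longrightarrow> exp (-fv) \<le> success_prob m Lr (wsum_bern n (pT N T)) (1/25)"
  shows "real N * (ln 2 - ln (9/5) - 4/9 * ln (5/4)) \<le> real m + fv"
proof -
  define P where "P = Pow (Hs n)"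
  define D0 where "D0 = wsum_bern n (\<lambda>i. if i \<in> Hs n then 1/(real N+1) else 0)"
  define Cb where "Cb = (1 + 1 / real N) ^ N"
  define E where "E = exp (4 * real N / 9 * ln (5/4))"
  have finH: "finite (Hs n)" unfolding Hs_def by simp
  have finP: "finite P" unfolding P_def using finH by simp
  have cardP: "card P = 2 ^ N" unfolding P_def using finH card_Hs N by (simp add: card_Pow)
  have Cb0: "Cb \<ge> 0" unfolding Cb_def by simp
  have dom: "pmf (samples m (wsum_bern n (pT N T))) s \<le> Cb ^ m * pmf (samples m D0) s"
    if "T \<in> P" for T s
  proof -
    have "pmf (samples m (wsum_bern n (pT N T))) s \<le> (\<Prod>i\<in>{..<m}. Cb) * pmf (samples m D0) s"
      unfolding samples_def
      by (rule dom_Pi) (use that domination[OF N] Cb0 in \<open>auto simp: P_def Cb_def D0_def\<close>)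
    then show ?thesis by simp
  qed
  have "(\<Sum>T\<in>P. measure (bind_pmf (samples m (wsum_bern n (pT N T))) Lr) {G. dTV G (wsum_bern n (pT N T)) \<le> 1/25})
        \<le> Cb ^ m * ((9/5)^N * E)"
    by (rule packing[OF finP dom]) (use Cb0 ball[OF N] in \<open>auto simp: P_def E_def\<close>)
  then have up: "(\<Sum>T\<in>P. success_prob m Lr (wsum_bern n (pT N T)) (1/25)) \<le> Cb ^ m * ((9/5)^N * E)"
    unfolding success_prob_def .
  have "real (card P) * exp (-fv) \<le> (\<Sum>T\<in>P. success_prob m Lr (wsum_bern n (pT N T)) (1/25))"
    by (rule sum_bounded_below) (use learn in \<open>auto simp: P_def\<close>)
  also have "\<dots> \<le> Cb ^ m * ((9/5)^N * E)" by (rule up)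
  also have "\<dots> \<le> exp 1 ^ m * ((9/5)^N * E)"
    unfolding Cb_def using exp_pow_le[OF N(2)] E_def
    by (intro mult_right_mono power_mono) auto
  finally have ineq: "2 ^ N * exp (-fv) \<le> exp 1 ^ m * ((9/5)^N * E)" using cardP by simp
  have e2: "(2::real) ^ N = exp (real N * ln 2)" by (simp add: exp_of_nat_mult)
  have e95: "(9/5::real) ^ N = exp (real N * ln (9/5))" by (simp add: exp_of_nat_mult)
  have em: "exp 1 ^ m = exp (real m)" by (simp add: exp_of_nat_mult[symmetric])
  have "exp (real N * ln 2 - fv) \<le> exp (real m + real N * ln (9/5) + 4 * real N / 9 * ln (5/4))"
    using ineq unfolding e2 e95 em E_def by (simp add: exp_add[symmetric] exp_diff exp_minus field_simps)
  then have "real N * ln 2 - fv \<le> real m + real N * ln (9/5) + 4 * real N / 9 * ln (5/4)" by simp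
  then show ?thesis by (simp add: algebra_simps)
qed



theorem theorem3:
  fixes m :: "nat \<Rightarrow> nat"
    and L :: "nat \<Rightarrow> (nat \<Rightarrow> nat) \<Rightarrow> nat pmf pmf"
    and f :: "nat \<Rightarrow> real"
  assumes f_small: "f \<in> o(\<lambda>n. real n)"
    and learns: "\<And>n p. (\<forall>i\<in>{1..n}. 0 \<le> p i \<and> p i \<le> 1) \<Longrightarrow>
        success_prob (m n) (L n) (wsum_bern n p) (1/25) \<ge> exp (- f n)"
  shows "(\<lambda>n. real (m n)) \<in> \<Omega>(\<lambda>n. real n)"
proof -
  define \<gamma> :: real where "\<gamma> = ln 2 - ln (9/5) - 4/9 * ln (5/4)"
  have g0: "\<gamma> > 0" unfolding \<gamma>_def using gamma_pos by simp
  have ev1: "eventually (\<lambda>n. norm (f n) \<le> \<gamma>/4 * norm (real n)) at_top"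
    using landau_o.smallD[OF f_small, of "\<gamma>/4"] g0 by simp
  have ev2: "eventually (\<lambda>n::nat. n \<ge> 4) at_top" by (rule eventually_ge_at_top)
  have "eventually (\<lambda>n. norm (real (m n)) \<ge> \<gamma>/8 * norm (real n)) at_top"
    using ev1 ev2
  proof eventually_elim
    case (elim n)
    define N where "N = n div 2"
    have N1: "1 \<le> N" using elim(2) unfolding N_def by simp
    have k: "real N * \<gamma> \<le> real (m n) + f n"
      unfolding \<gamma>_def
      by (rule key[OF N_def N1]) (use learns pT_range[OF N1] Hs_sub in blast)
    have "real n - 1 \<le> 2 * real N" unfolding N_def by linarith
    then have "(real n - 1) / 2 * \<gamma> \<le> real N * \<gamma>" using g0 by (intro mult_right_mono) auto
    moreover have "f n \<le> \<gamma>/4 * real n" using elim(1) by simp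
    moreover have "0 \<le> (real n - 4) * \<gamma>" using elim(2) g0 by simp
    ultimately have "\<gamma>/8 * real n \<le> real (m n)" using k by (simp add: algebra_simps)
    then show ?case by simp
  qed
  then show ?thesis using g0 by (intro landau_omega.bigI[of "\<gamma>/8"]) auto
qed


end
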